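(* Let $M=(m_{ij})_{1\le i,j\le 4}$ be an invertible real $4\times 4$ matrix and let $\phi$ be the associated partial map $\mathbb{R}^3\to\mathbb{R}^3$, $$\phi(\lambda_1,\lambda_2,\lambda_3)=\left(\frac{w_1}{w_4},\frac{w_2}{w_4},\frac{w_3}{w_4}\right),\qquad w=M(\lambda_1,\lambda_2,\lambda_3,1)^{T},$$ defined wherever $w_4\neq 0$. Assume: (1) $\phi$ is defined at the origin and $\phi(0)=0$; (2) $\phi$ preserves each of the three coordinate axes, i.e. for each $k\in\{1,2,3\}$, every point of the $k$-th coordinate axis at which $\phi$ is defined is mapped into the $k$-th coordinate axis; (3) $\phi$ is defined on the whole closed half-space $\{(x,y,z)\in\mathbb{R}^3: z\ge 0\}$, i.e. $(M(x,y,z,1)^T)_4\neq 0$ whenever $z\ge 0$; (4) the differential of $\phi$ at the origin is the identity: $d\phi[0;v]=v$ for all $v\in\mathbb{R}^3$. Then there exist $\lambda\in\mathbb{R}\setminus\{0\}$ and $c\ge 0$ such that $$M=\lambda\begin{pmatrix}1&0&0&0\\0&1&0&0\\0&0&1&0\\0&0&c&1\end{pmatrix},$$ so that $\phi(x,y,z)=\left(\frac{x}{cz+1},\frac{y}{cz+1},\frac{z}{cz+1}\right)$.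
   Context: Points of $\mathbb{R}^3$ are written $(x,y,z)$; the $z$-axis is interpreted as the direction in which the subject is looking. Any invertible $4\times4$ matrix induces a projective transformation of $P_3(\mathbb{R})$, and $M$ and $\lambda M$ ($\lambda\ne0$) induce the same transformation; $\phi$ above is its expression in the affine chart where the fourth homogeneous coordinate equals $1$. *)

theory Defs
  imports "HOL-Analysis.Analysis"
begin

definition homog :: "real^3 \<Rightarrow> real^4" where
  "homog p = (\<chi> i. if i = 1 then p$1 else if i = 2 then p$2 else if i = 3 then p$3 else 1)"

definition hw :: "real^4^4 \<Rightarrow> real^3 \<Rightarrow> real^4" where
  "hw M p = M *v homog p"

definition phi_defined :: "real^4^4 \<Rightarrow> real^3 \<Rightarrow> bool" where
  "phi_defined M p \<longleftrightarrow> hw M p $ 4 \<noteq> 0"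

definition phi :: "real^4^4 \<Rightarrow> real^3 \<Rightarrow> real^3" where
  "phi M p = (let w = hw M p in
     (\<chi> i. if i = 1 then w$1 / w$4 else if i = 2 then w$2 / w$4 else w$3 / w$4))"

definition perspM :: "real \<Rightarrow> real^4^4" where
  "perspM c = (\<chi> i j. if i = j then 1 else if i = 4 \<and> j = 3 then c else 0)"

end

theory Submission
  imports Defs
begin

lemma hw_exp: "hw M p $ i = M$i$1*p$1 + M$i$2*p$2 + M$i$3*p$3 + M$i$4"
  unfolding hw_def matrix_vector_mult_def homog_def by (simp add: sum_4)

lemma phi1: "phi M p $ 1 = hw M p $ 1 / hw M p $ 4"
  unfolding phi_def Let_def by simp
lemma phi2: "phi M p $ 2 = hw M p $ 2 / hw M p $ 4"
  unfolding phi_def Let_def by simp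
lemma phi3: "phi M p $ 3 = hw M p $ 3 / hw M p $ 4"
  unfolding phi_def Let_def by simp

lemma dir_deriv:
  assumes diff: "(phi M has_derivative id) (at 0)"
  shows "((\<lambda>t. phi M (axis k t) $ k) has_real_derivative 1) (at 0)"
proof -
  have l: "((\<lambda>t. axis k t) has_derivative (\<lambda>t. axis k t)) (at (0::real))"
  proof -
    have e: "(\<lambda>t. axis k t) = (\<lambda>t. t *\<^sub>R axis k (1::real))"
      by (rule ext) (simp add: vec_eq_iff axis_def)
    from bounded_linear_imp_has_derivative[OF bounded_linear_scaleR_left, of "axis k (1::real)" "at 0"]
    show ?thesis by (simp only: e[symmetric])
  qed
  have z: "axis k (0::real) = 0" by (simp add: vec_eq_iff axis_def)
  have "(phi M has_derivative id) (at (axis k 0))" using diff by (simp only: z)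
  then have "((phi M \<circ> (\<lambda>t. axis k t)) has_derivative (id \<circ> (\<lambda>t. axis k t))) (at 0)"
    by (rule diff_chain_at[OF l])
  note bounded_linear.has_derivative[OF bounded_linear_vec_nth[of k] this]
  moreover have e1: "(\<lambda>t. (id \<circ> (\<lambda>t. axis k t)) t $ k) = (*) (1::real)"
    by (simp add: axis_def fun_eq_iff)
  moreover have e2: "(\<lambda>t. (phi M \<circ> (\<lambda>t. axis k t)) t $ k) = (\<lambda>t. phi M (axis k t) $ k)"
    by (simp add: o_def)
  ultimately show ?thesis unfolding has_field_derivative_def e1 e2 by metis
qed

lemma deriv_lemma:
  fixes a b e :: real
  assumes d: "((\<lambda>t. a*t/(b*t+e)) has_real_derivative 1) (at 0)" and e: "e \<noteq> 0"
  shows "a = e"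
proof -
  have "((\<lambda>t. a*t/(b*t+e)) has_real_derivative (a*(b*0+e) - a*0*b)/((b*0+e)*(b*0+e))) (at 0)"
    using e by (auto intro!: derivative_eq_intros)
  then have "((\<lambda>t. a*t/(b*t+e)) has_real_derivative a/e) (at 0)"
    using e by (simp add: field_simps)
  from DERIV_unique[OF d this] have "a/e = 1" by simp
  with e show ?thesis by (simp add: field_simps)
qed

definition pt :: "real \<Rightarrow> real \<Rightarrow> real \<Rightarrow> real^3" where
  "pt x y z = (\<chi> i. if i = 1 then x else if i = 2 then y else z)"

lemma pt_nth [simp]: "pt x y z $ 1 = x" "pt x y z $ 2 = y" "pt x y z $ 3 = z"
  by (simp_all add: pt_def)

theorem mainTheorem1:
  fixes M :: "real^4^4"
  assumes inv: "invertible M"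
    and def0: "phi_defined M 0" and fix0: "phi M 0 = 0"
    and axes: "\<And>(k::3) t. phi_defined M (axis k t) \<Longrightarrow> (\<exists>s. phi M (axis k t) = axis k s)"
    and halfspace: "\<And>p::real^3. p$3 \<ge> 0 \<Longrightarrow> phi_defined M p"
    and diff: "(phi M has_derivative id) (at 0)"
  shows "\<exists>l c. l \<noteq> 0 \<and> c \<ge> 0 \<and> M = l *\<^sub>R perspM c"
proof -
  define e where "e = M$4$4"
  have e0: "e \<noteq> 0" using def0 unfolding phi_defined_def e_def by (simp add: hw_exp)
  have c14: "M$1$4 = 0" using arg_cong[OF fix0, of "\<lambda>v. v$1"] e0
    by (simp add: phi1 hw_exp e_def)
  have c24: "M$2$4 = 0" using arg_cong[OF fix0, of "\<lambda>v. v$2"] e0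
    by (simp add: phi2 hw_exp e_def)
  have c34: "M$3$4 = 0" using arg_cong[OF fix0, of "\<lambda>v. v$3"] e0
    by (simp add: phi3 hw_exp e_def)
  have ax: "\<And>k::3. phi_defined M (axis k 1)"
    by (rule halfspace) (simp add: axis_def)
  obtain s1 where s1: "phi M (axis 1 1) = axis 1 s1" using axes ax by blast
  obtain s2 where s2: "phi M (axis 2 1) = axis 2 s2" using axes ax by blast
  obtain s3 where s3: "phi M (axis 3 1) = axis 3 s3" using axes ax by blast
  have d1: "hw M (axis 1 1) $ 4 \<noteq> 0" using ax[of 1] by (simp add: phi_defined_def)
  have d2: "hw M (axis 2 1) $ 4 \<noteq> 0" using ax[of 2] by (simp add: phi_defined_def)
  have d3: "hw M (axis 3 1) $ 4 \<noteq> 0" using ax[of 3] by (simp add: phi_defined_def)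
  have c21: "M$2$1 = 0" using arg_cong[OF s1, of "\<lambda>v. v$2"] d1
    by (simp add: phi2 hw_exp axis_def c24)
  have c31: "M$3$1 = 0" using arg_cong[OF s1, of "\<lambda>v. v$3"] d1
    by (simp add: phi3 hw_exp axis_def c34)
  have c12: "M$1$2 = 0" using arg_cong[OF s2, of "\<lambda>v. v$1"] d2
    by (simp add: phi1 hw_exp axis_def c14)
  have c32: "M$3$2 = 0" using arg_cong[OF s2, of "\<lambda>v. v$3"] d2
    by (simp add: phi3 hw_exp axis_def c34)
  have c13: "M$1$3 = 0" using arg_cong[OF s3, of "\<lambda>v. v$1"] d3
    by (simp add: phi1 hw_exp axis_def c14)
  have c23: "M$2$3 = 0" using arg_cong[OF s3, of "\<lambda>v. v$2"] d3
    by (simp add: phi2 hw_exp axis_def c24)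
  have "((\<lambda>t. M$1$1*t/(M$4$1*t+e)) has_real_derivative 1) (at 0)"
  proof -
    have "(\<lambda>t. phi M (axis 1 t) $ 1) = (\<lambda>t. M$1$1*t/(M$4$1*t+e))"
      by (rule ext) (simp add: phi1 hw_exp axis_def c12 c13 c14 e_def)
    with dir_deriv[OF diff, of 1] show ?thesis by simp
  qed
  from deriv_lemma[OF this e0] have c11: "M$1$1 = e" .
  have "((\<lambda>t. M$2$2*t/(M$4$2*t+e)) has_real_derivative 1) (at 0)"
  proof -
    have "(\<lambda>t. phi M (axis 2 t) $ 2) = (\<lambda>t. M$2$2*t/(M$4$2*t+e))"
      by (rule ext) (simp add: phi2 hw_exp axis_def c21 c23 c24 e_def)
    with dir_deriv[OF diff, of 2] show ?thesis by simp
  qed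
  from deriv_lemma[OF this e0] have c22: "M$2$2 = e" .
  have "((\<lambda>t. M$3$3*t/(M$4$3*t+e)) has_real_derivative 1) (at 0)"
  proof -
    have "(\<lambda>t. phi M (axis 3 t) $ 3) = (\<lambda>t. M$3$3*t/(M$4$3*t+e))"
      by (rule ext) (simp add: phi3 hw_exp axis_def c31 c32 c34 e_def)
    with dir_deriv[OF diff, of 3] show ?thesis by simp
  qed
  from deriv_lemma[OF this e0] have c33: "M$3$3 = e" .
  have hs: "\<And>x y z. z \<ge> 0 \<Longrightarrow> M$4$1*x + M$4$2*y + M$4$3*z + e \<noteq> 0"
  proof -
    fix x y z :: real assume "z \<ge> 0"
    then have "phi_defined M (pt x y z)" by (intro halfspace) simp
    then show "M$4$1*x + M$4$2*y + M$4$3*z + e \<noteq> 0"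
      by (simp add: phi_defined_def hw_exp e_def)
  qed
  have c41: "M$4$1 = 0"
  proof (rule ccontr)
    assume h: "M$4$1 \<noteq> 0"
    from hs[of 0 "-e/M$4$1" 0] h show False by (simp add: field_simps)
  qed
  have c42: "M$4$2 = 0"
  proof (rule ccontr)
    assume h: "M$4$2 \<noteq> 0"
    from hs[of 0 0 "-e/M$4$2"] h show False by (simp add: field_simps)
  qed
  have cpos: "M$4$3 / e \<ge> 0"
  proof (rule ccontr)
    assume h: "\<not> M$4$3 / e \<ge> 0"
    then have "M$4$3 \<noteq> 0" by auto
    moreover have "- e / M$4$3 \<ge> 0" using h e0
      by (auto simp: divide_less_0_iff not_le divide_nonneg_nonneg divide_nonpos_neg divide_nonneg_pos intro: divide_nonpos_pos divide_nonneg_neg)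
    ultimately show False using hs[of "-e/M$4$3" 0 0] by (simp add: field_simps)
  qed
  have "M = e *\<^sub>R perspM (M$4$3 / e)"
    unfolding vec_eq_iff perspM_def forall_4
    using e0 by (simp add: c11 c12 c13 c14 c21 c22 c23 c24 c31 c32 c33 c34 c41 c42 e_def)
  with e0 cpos show ?thesis by blast
qed

end
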